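(* Let $R$ satisfy $\{0\}\subsetneq R\subseteq\mathbb Q$ and $r\cdot\mathbb Z\subseteq R$ for every $r\in R$, and let $m\in(\mathbb Z\setminus\{0\})\cap R$. Then for every $b\in R$: $b\neq 0$ if and only if the equation \[ y\cdot b-m^2-\sum_{i=1}^4 y_i^2=0 \] is solvable in $y,y_1,y_2,y_3,y_4\in R$. *)

theory Defs
  imports Complex_Main
begin

end

theory Submission
  imports Defs "HOL-Number_Theory.Number_Theory"
begin


lemma sq_inj_aux:
  fixes p x x' :: int
  assumes "prime p" "0 \<le> x" "0 \<le> x'" "2*x < p" "2*x' < p" "p dvd x^2 - x'^2"
  shows "x = x'"
proof -
  have "x^2 - x'^2 = (x - x') * (x + x')" by (simp add: power2_eq_square algebra_simps)
  with assms(6) have "p dvd (x - x') \<or> p dvd (x + x')"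
    using assms(1) prime_dvd_mult_iff by metis
  then show ?thesis
  proof
    assume h: "p dvd x - x'"
    show ?thesis
    proof (rule ccontr)
      assume "x \<noteq> x'"
      then have "\<bar>p\<bar> \<le> \<bar>x - x'\<bar>" using dvd_imp_le_int h by auto
      then show False using assms by auto
    qed
  next
    assume h: "p dvd x + x'"
    show ?thesis
    proof (rule ccontr)
      assume "x \<noteq> x'"
      then have "x + x' \<noteq> 0" using assms by auto
      then have "\<bar>p\<bar> \<le> \<bar>x + x'\<bar>" using dvd_imp_le_int h by auto
      then show False using assms by auto
    qed
  qed
qed

lemma prime_two_sq:
  fixes p :: int
  assumes "prime p"
  shows "\<exists>x y. p dvd 1 + x^2 + y^2"
proof (cases "p = 2")
  case True
  then show ?thesis by (intro exI[of _ 1] exI[of _ 0]) simp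
next
  case False
  have p1: "p > 1" using prime_gt_1_int assms by auto
  define h where "h = (p - 1) div 2"
  have odd: "odd p" using assms False p1 prime_odd_int by force
  then have hp: "2*h + 1 = p" unfolding h_def by presburger
  define f where "f = (\<lambda>x::int. x^2 mod p)"
  define g where "g = (\<lambda>y::int. (-1 - y^2) mod p)"
  have injf: "inj_on f {0..h}"
  proof (rule inj_onI)
    fix x x' assume "x \<in> {0..h}" "x' \<in> {0..h}" "f x = f x'"
    then show "x = x'" using sq_inj_aux[OF assms, of x x'] hp
      by (auto simp: f_def mod_eq_dvd_iff)
  qed
  have injg: "inj_on g {0..h}"
  proof (rule inj_onI)
    fix x x' assume a: "x \<in> {0..h}" "x' \<in> {0..h}" "g x = g x'"
    then have "p dvd (-1 - x^2) - (-1 - x'^2)" by (auto simp: g_def mod_eq_dvd_iff)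
    then have "p dvd x'^2 - x^2" by (simp add: algebra_simps)
    then show "x = x'" using sq_inj_aux[OF assms, of x' x] hp a
      by auto
  qed
  have sub: "f ` {0..h} \<union> g ` {0..h} \<subseteq> {0..<p}"
    using p1 by (auto simp: f_def g_def)
  show ?thesis
  proof (rule ccontr)
    assume nex: "\<not> ?thesis"
    have disj: "f ` {0..h} \<inter> g ` {0..h} = {}"
    proof (rule ccontr)
      assume "f ` {0..h} \<inter> g ` {0..h} \<noteq> {}"
      then obtain x y where "f x = g y" by auto
      then have "p dvd x^2 - (-1 - y^2)" by (auto simp: f_def g_def mod_eq_dvd_iff)
      then have "p dvd 1 + x^2 + y^2" by (simp add: algebra_simps)
      then show False using nex by auto
    qed
    have "card (f ` {0..h} \<union> g ` {0..h}) = card (f ` {0..h}) + card (g ` {0..h})"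
      using disj by (simp add: card_Un_disjoint)
    also have "\<dots> = 2 * nat (h + 1)" using injf injg by (simp add: card_image)
    finally have "card (f ` {0..h} \<union> g ` {0..h}) = nat p + 1" using hp p1 by auto
    moreover have "card (f ` {0..h} \<union> g ` {0..h}) \<le> card {0..<p}"
      by (rule card_mono[OF _ sub]) simp
    ultimately show False by simp
  qed
qed

definition Qf :: "int \<Rightarrow> int \<Rightarrow> int \<Rightarrow> int \<Rightarrow> int" where
  "Qf a b c d = 1 + a^2 + b^2 + c^2 + d^2"

lemma combine:
  fixes a b :: int
  assumes "coprime a b" "a dvd Qf x1 x2 x3 x4" "b dvd Qf y1 y2 y3 y4"
  shows "\<exists>z1 z2 z3 z4. a * b dvd Qf z1 z2 z3 z4"
proof -
  obtain u v where uv: "u * a + v * b = 1"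
    using bezout_int[of a b] assms(1) by (auto simp: coprime_iff_gcd_eq_1)
  define z where "z = (\<lambda>x y. v*b*x + u*a*y)"
  have ca: "[z x y = x] (mod a)" for x y
  proof -
    have vb: "v*b*x = (1 - u*a)*x" using uv by (metis add_diff_cancel_left')
    have "z x y = x + a * (u*(y - x))" unfolding z_def vb
      by (simp add: algebra_simps)
    then show ?thesis by (metis cong_iff_lin cong_sym)
  qed
  have cb: "[z x y = y] (mod b)" for x y
  proof -
    have ua: "u*a*y = (1 - v*b)*y" using uv by (metis add_diff_cancel_right')
    have "z x y = y + b * (v*(x - y))" unfolding z_def ua
      by (simp add: algebra_simps)
    then show ?thesis by (metis cong_iff_lin cong_sym)
  qed
  have "[Qf (z x1 y1) (z x2 y2) (z x3 y3) (z x4 y4) = Qf x1 x2 x3 x4] (mod a)"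
    unfolding Qf_def by (intro cong_add cong_pow ca cong_refl)
  then have A: "a dvd Qf (z x1 y1) (z x2 y2) (z x3 y3) (z x4 y4)"
    using assms(2) cong_dvd_iff by blast
  have "[Qf (z x1 y1) (z x2 y2) (z x3 y3) (z x4 y4) = Qf y1 y2 y3 y4] (mod b)"
    unfolding Qf_def by (intro cong_add cong_pow cb cong_refl)
  then have B: "b dvd Qf (z x1 y1) (z x2 y2) (z x3 y3) (z x4 y4)"
    using assms(3) cong_dvd_iff by blast
  show ?thesis using divides_mult[OF A B assms(1)] by blast
qed

lemma lift_odd:
  fixes p k x S :: int
  assumes "k dvd 1 + x^2 + S" "prime p" "p \<noteq> 2" "p dvd k" "\<not> p dvd x"
  shows "\<exists>x'. p * k dvd 1 + x'^2 + S"
proof -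
  obtain s where s: "1 + x^2 + S = k * s" using assms(1) by (auto simp: dvd_def)
  obtain j where j: "k = p * j" using assms(4) by (auto simp: dvd_def)
  have "\<not> p dvd 2"
  proof
    assume "p dvd 2"
    then have "p \<le> 2" using dvd_imp_le_int[of 2 p] prime_gt_1_int[OF assms(2)] by auto
    then show False using prime_gt_1_int[OF assms(2)] assms(3) by auto
  qed
  then have "\<not> p dvd 2 * x" using assms(2,5) prime_dvd_mult_iff by blast
  then have "coprime p (2*x)" using assms(2) prime_imp_coprime by blast
  then obtain a c where ac: "a * (2*x) + c * p = 1"
    using bezout_int[of "2*x" p] by (auto simp: coprime_iff_gcd_eq_1 gcd.commute)
  define t where "t = - s * a"
  have "1 + (x + k*t)^2 + S = (1 + x^2 + S) + k*(2*x*t + k*t^2)"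
    by (simp add: power2_eq_square algebra_simps)
  also have "\<dots> = k * (s + 2*x*t + k*t^2)" using s by (simp add: algebra_simps)
  also have "s + 2*x*t = s * (1 - a*(2*x))" unfolding t_def by (simp add: algebra_simps)
  also have "\<dots> = s * c * p"
  proof -
    have "1 - a*(2*x) = c*p" using ac by linarith
    then show ?thesis by simp
  qed
  finally have "1 + (x + k*t)^2 + S = p * k * (s*c + j*t^2)" using j
    by (simp add: algebra_simps)
  then show ?thesis by (metis dvd_triv_left)
qed

lemma lift_two:
  fixes k x S :: int
  assumes "k dvd 1 + x^2 + S" "8 dvd k" "odd x"
  shows "\<exists>x'. 2 * k dvd 1 + x'^2 + S"
proof -
  obtain s where s: "1 + x^2 + S = k * s" using assms(1) by (auto simp: dvd_def)
  obtain g where g: "k = 8 * g" using assms(2) by (auto simp: dvd_def)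
  show ?thesis
  proof (cases "even s")
    case True
    then obtain e where "s = 2*e" by auto
    then have "1 + x^2 + S = 2 * k * e" using s by simp
    then show ?thesis by (metis dvd_triv_left)
  next
    case False
    have "even (s + x)" using False assms(3) by simp
    then obtain e where e: "s + x = 2*e" by (metis dvdE)
    have "1 + (x + 4*g)^2 + S = (1 + x^2 + S) + 8*g*x + 16*g^2"
      by (simp add: power2_eq_square algebra_simps)
    also have "\<dots> = 8*g*(s + x) + 16*g^2" using s g by (simp add: algebra_simps)
    also have "\<dots> = 2 * k * (e + g)" using e g by (simp add: power2_eq_square algebra_simps)
    finally show ?thesis by (metis dvd_triv_left)
  qed
qed

lemma Qf_syms: "Qf a b c d = Qf b a c d" "Qf a b c d = Qf c b a d" "Qf a b c d = Qf d b c a"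
  by (simp_all add: Qf_def algebra_simps)

lemma lift_odd_Q:
  assumes "k dvd Qf a b c d" "prime p" "p \<noteq> 2" "p dvd k" "\<not> p dvd a"
  shows "\<exists>a'. p * k dvd Qf a' b c d"
  using lift_odd[of k a "b^2 + c^2 + d^2" p] assms unfolding Qf_def by (simp add: add.assoc)

lemma lift_two_Q:
  assumes "k dvd Qf a b c d" "8 dvd k" "odd a"
  shows "\<exists>a'. 2 * k dvd Qf a' b c d"
  using lift_two[of k a "b^2 + c^2 + d^2"] assms unfolding Qf_def by (simp add: add.assoc)

lemma lift_any_Q:
  assumes "k dvd Qf a b c d"
    and L: "\<And>a b c d. k dvd Qf a b c d \<Longrightarrow> P a \<Longrightarrow> \<exists>a'. m dvd Qf a' b c d"
    and "P a \<or> P b \<or> P c \<or> P d"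
  shows "\<exists>a b c d. m dvd Qf a b c d"
  using assms(3)
proof (elim disjE)
  assume "P a" then show ?thesis using L[OF assms(1)] by blast
next
  assume "P b" then show ?thesis using L[of b a c d] assms(1) Qf_syms by metis
next
  assume "P c" then show ?thesis using L[of c b a d] assms(1) Qf_syms by metis
next
  assume "P d" then show ?thesis using L[of d b c a] assms(1) Qf_syms by metis
qed

lemma four_sq_mod: "0 < n \<Longrightarrow> \<exists>a b c d. int n dvd Qf a b c d"
proof (induction n rule: less_induct)
  case (less n)
  show ?case
  proof (cases "\<exists>a b. n = a*b \<and> 1 < a \<and> 1 < b \<and> coprime a b")
    case True
    then obtain a b where ab: "n = a*b" "1 < a" "1 < b" "coprime a b" by blast
    have "a < n" "b < n" using ab by auto
    then obtain x1 x2 x3 x4 y1 y2 y3 y4 where "int a dvd Qf x1 x2 x3 x4" "int b dvd Qf y1 y2 y3 y4"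
      using less.IH ab by (meson less_trans zero_less_one)
    then show ?thesis using combine[of "int a" "int b"] ab by (simp add: coprime_int_iff)
  next
    case H: False
    show ?thesis
    proof (cases "n = 1")
      case True then show ?thesis by auto
    next
      case False
      then obtain p where p: "prime p" "p dvd n" using prime_factor_nat by blast
      then obtain k where k: "n = p * k" by (auto simp: dvd_def)
      have p1: "1 < p" using p prime_gt_1_nat by auto
      have k0: "0 < k" using k less.prems by auto
      have kn: "k < n" using k p1 k0 by auto
      obtain x1 x2 x3 x4 where X: "int k dvd Qf x1 x2 x3 x4" using less.IH[OF kn k0] by blast
      show ?thesis
      proof (cases "k = 1")
        case True
        have "prime (int p)" using p by simp
        then obtain x y where "int p dvd 1 + x^2 + y^2" using prime_two_sq by blast
        then have "int n dvd Qf x y 0 0" using True k by (simp add: Qf_def)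
        then show ?thesis by blast
      next
        case k1: False
        have pk: "p dvd k"
        proof (rule ccontr)
          assume "\<not> p dvd k"
          then have "coprime p k" using p prime_imp_coprime by blast
          then show False using H k p1 k0 k1 by auto
        qed
        show ?thesis
        proof (cases "p = 2")
          case False
          have ip: "prime (int p)" "int p \<noteq> 2" "int p dvd int k" using p False pk by auto
          have "\<not> int p dvd 1" using p1 by auto
          have "\<not> int p dvd x1 \<or> \<not> int p dvd x2 \<or> \<not> int p dvd x3 \<or> \<not> int p dvd x4"
          proof (rule ccontr)
            assume "\<not> ?thesis"
            then have d: "int p dvd x1" "int p dvd x2" "int p dvd x3" "int p dvd x4" by blast+
            have "int p dvd x1^2 + x2^2 + x3^2 + x4^2" unfolding power2_eq_square
              by (intro dvd_add dvd_mult2 d)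
            moreover have "int p dvd Qf x1 x2 x3 x4" using ip(3) X by (rule dvd_trans)
            moreover have "Qf x1 x2 x3 x4 = (x1^2 + x2^2 + x3^2 + x4^2) + 1" by (simp add: Qf_def)
            ultimately have "int p dvd 1"
              using dvd_add_right_iff by metis
            then show False using p1 by auto
          qed
          then have "\<exists>a b c d. int p * int k dvd Qf a b c d"
            using lift_any_Q[OF X, of "\<lambda>a. \<not> int p dvd a" "int p * int k"]
              lift_odd_Q[OF _ ip(1,2,3)] by blast
          then show ?thesis using k by simp
        next
          case p2: True
          show ?thesis
          proof (cases "k = 2")
            case True
            then have "int n dvd Qf 1 1 1 0" using k p2 by (simp add: Qf_def)
            then show ?thesis by blast
          next
            case k2: False
            show ?thesis
            proof (cases "k = 4")
              case True
              then have "int n dvd Qf 1 1 1 2" using k p2 by (simp add: Qf_def)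
              then show ?thesis by blast
            next
              case k4: False
              obtain j where j: "k = 2*j" using pk p2 by auto
              have "even j"
              proof (rule ccontr)
                assume "odd j"
                then have "coprime (2::nat) j" by simp
                then have c: "coprime ((2::nat)^2) j" using coprime_power_left_iff by blast
                have "1 < j" using j k2 k0 by (cases "j = 1") auto
                moreover have "n = 2^2 * j" using k j p2 by simp
                ultimately have "\<exists>a b. n = a*b \<and> 1 < a \<and> 1 < b \<and> coprime a b"
                  using c by (intro exI[of _ "2^2"] exI[of _ j]) simp
                then show False using H by blast
              qed
              then obtain i where i: "j = 2*i" by auto
              have "even i"
              proof (rule ccontr)
                assume "odd i"
                then have "coprime (2::nat) i" by simp
                then have c: "coprime ((2::nat)^3) i" using coprime_power_left_iff by blast
                have "1 < i" using i j k4 k0 by (cases "i = 1") auto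
                moreover have "n = 2^3 * i" using k j i p2 by simp
                ultimately have "\<exists>a b. n = a*b \<and> 1 < a \<and> 1 < b \<and> coprime a b"
                  using c by (intro exI[of _ "2^3"] exI[of _ i]) simp
                then show False using H by blast
              qed
              then have k8: "8 dvd int k" using i j by auto
              have "odd x1 \<or> odd x2 \<or> odd x3 \<or> odd x4"
              proof (rule ccontr)
                assume "\<not> ?thesis"
                then have "odd (Qf x1 x2 x3 x4)" by (auto simp: Qf_def)
                moreover have "2 dvd int k" using k8 by (metis dvd_trans numeral_Bit0 dvd_triv_left mult_2)
                ultimately show False using X by (metis dvd_trans)
              qed
              then have "\<exists>a b c d. 2 * int k dvd Qf a b c d"
                using lift_any_Q[OF X, of odd "2 * int k"] lift_two_Q[OF _ k8] by blast
              then show ?thesis using k p2 by simp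
            qed
          qed
        qed
      qed
    qed
  qed
qed


theorem lemma4:
  fixes R :: "rat set" and m :: rat
  assumes "{0} \<subset> R"
    and "\<forall>r\<in>R. \<forall>z::int. r * of_int z \<in> R"
    and "m \<in> \<int>" and "m \<noteq> 0" and "m \<in> R"
  shows "\<forall>b\<in>R. b \<noteq> 0 \<longleftrightarrow>
    (\<exists>y\<in>R. \<exists>y1\<in>R. \<exists>y2\<in>R. \<exists>y3\<in>R. \<exists>y4\<in>R.
       y * b - m^2 - (y1^2 + y2^2 + y3^2 + y4^2) = 0)"
proof
  fix b assume bR: "b \<in> R"
  show "b \<noteq> 0 \<longleftrightarrow>
    (\<exists>y\<in>R. \<exists>y1\<in>R. \<exists>y2\<in>R. \<exists>y3\<in>R. \<exists>y4\<in>R.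
       y * b - m^2 - (y1^2 + y2^2 + y3^2 + y4^2) = 0)"
  proof
    assume b0: "b \<noteq> 0"
    obtain p q where pq: "quotient_of b = (p, q)" by (cases "quotient_of b") auto
    have bpq: "b = of_int p / of_int q" using quotient_of_div[OF pq] .
    have q0: "0 < q" using quotient_of_denom_pos[OF pq] .
    have p0: "p \<noteq> 0" using b0 bpq by auto
    obtain x1 x2 x3 x4 where X: "int (nat \<bar>p\<bar>) dvd Qf x1 x2 x3 x4"
      using four_sq_mod[of "nat \<bar>p\<bar>"] p0 by auto
    then obtain s where s: "Qf x1 x2 x3 x4 = \<bar>p\<bar> * s" using p0 by (auto simp: dvd_def)
    obtain M where M: "m = of_int M" using assms(3) Ints_cases by blast
    define y where "y = m * of_int (M * sgn p * s * q)"
    have yR: "y \<in> R" using assms(2,5) unfolding y_def by blast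
    have xR: "m * of_int x \<in> R" for x using assms(2,5) by blast
    have sp: "sgn p * p = \<bar>p\<bar>" by (simp add: abs_if sgn_if)
    have "y * b = m * of_int M * of_int (sgn p * p) * of_int s"
      unfolding y_def bpq using q0 by (simp add: field_simps)
    also have "\<dots> = m^2 * of_int (Qf x1 x2 x3 x4)" unfolding sp s M
      by (simp add: power2_eq_square algebra_simps)
    also have "\<dots> = m^2 + ((m * of_int x1)^2 + (m * of_int x2)^2 + (m * of_int x3)^2 + (m * of_int x4)^2)"
      by (simp add: Qf_def power2_eq_square algebra_simps)
    finally show "\<exists>y\<in>R. \<exists>y1\<in>R. \<exists>y2\<in>R. \<exists>y3\<in>R. \<exists>y4\<in>R.
       y * b - m^2 - (y1^2 + y2^2 + y3^2 + y4^2) = 0"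
      using yR xR by (intro bexI[of _ y] bexI[of _ "m * of_int x1"] bexI[of _ "m * of_int x2"]
          bexI[of _ "m * of_int x3"] bexI[of _ "m * of_int x4"]) auto
  next
    assume "\<exists>y\<in>R. \<exists>y1\<in>R. \<exists>y2\<in>R. \<exists>y3\<in>R. \<exists>y4\<in>R.
       y * b - m^2 - (y1^2 + y2^2 + y3^2 + y4^2) = 0"
    then obtain y y1 y2 y3 y4 where e: "y * b - m^2 - (y1^2 + y2^2 + y3^2 + y4^2) = 0" by blast
    show "b \<noteq> 0"
    proof
      assume "b = 0"
      then have "m^2 + (y1^2 + y2^2 + y3^2 + y4^2) = 0" using e by simp
      moreover have "m^2 > 0" using assms(4) by simp
      moreover have "y1^2 + y2^2 + y3^2 + y4^2 \<ge> 0" by simp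
      ultimately show False by linarith
    qed
  qed
qed

end
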